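(* Let $G$ be a finite abelian group and let $k \in \mathbb{N}$. Let $B$ be a zero-sum sequence over $G$ with $\max\mathsf{L}(B)=k$. If there exist a factorization $\zeta$ of $B$ with $|\zeta|=k$ and a minimal zero-sum sequence $U$ occurring at least $\delta(G)$ times as a factor in $\zeta$, then $\max \mathsf{L}(BU)=k+1$.
   Context: $G$ is written additively. A sequence over $G$ is an element of the free abelian monoid $\mathcal{F}(G)$ (finite unordered list with repetitions). A zero-sum sequence has terms summing to $0$; a minimal zero-sum sequence is a non-empty zero-sum sequence with no proper non-empty zero-sum subsequence; $\mathcal{A}(G)$ is the set of these. Factorizations are elements of the free abelian monoid $\mathsf{Z}(G)$ over $\mathcal{A}(G)$ (formal unordered products of minimal zero-sum sequences); $\pi$ evaluates the product; a factorization of $B$ is a $\zeta$ with $\pi(\zeta)=B$; $|\zeta|$ is the number of factors; $\mathsf{L}(B)$ is the set of lengths of factorizations of $B$. $\mathsf{d}(\zeta,\xi)=\max\{|\gcd(\zeta,\xi)^{-1}\zeta|,|\gcd(\zeta,\xi)^{-1}\xi|\}$. Distinct $k,\ell\in\mathsf{L}(B)$ are adjacent lengths if no element of $\mathsf{L}(B)$ lies strictly between them. $\delta(\zeta)$ is the smallest $m\in\mathbb{N}_0$ such that for every $k\in\mathbb{N}$ with $k$, $|\zeta|$ adjacent lengths of $\pi(\zeta)$ there exists a factorization $\xi$ of $\pi(\zeta)$ with $|\xi|=k$ and $\mathsf{d}(\xi,\zeta)\le m$; $\delta(G)=\sup\{\delta(\zeta):\zeta\in\mathsf{Z}(G)\}$.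 *)

theory Defs
  imports Main "HOL-Library.Multiset" "HOL-Library.Extended_Nat"
begin

(* Sequences over G are multisets over the finite abelian group type 'a. *)

definition zero_sum :: "'a::ab_group_add multiset \<Rightarrow> bool" where
  "zero_sum S \<longleftrightarrow> sum_mset S = 0"

definition min_zero_sum :: "'a::ab_group_add multiset \<Rightarrow> bool" where
  "min_zero_sum S \<longleftrightarrow> S \<noteq> {#} \<and> zero_sum S \<and>
     (\<forall>T. T \<subseteq># S \<and> T \<noteq> {#} \<and> zero_sum T \<longrightarrow> T = S)"

definition atoms :: "'a::ab_group_add multiset set" where
  "atoms = {S. min_zero_sum S}"

definition is_fact :: "'a::ab_group_add multiset multiset \<Rightarrow> bool" where
  "is_fact z \<longleftrightarrow> set_mset z \<subseteq> atoms"

definition fact_pi :: "'a::ab_group_add multiset multiset \<Rightarrow> 'a multiset" where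
  "fact_pi z = sum_mset z"

definition facts :: "'a::ab_group_add multiset \<Rightarrow> 'a multiset multiset set" where
  "facts B = {z. is_fact z \<and> fact_pi z = B}"

definition lengths :: "'a::ab_group_add multiset \<Rightarrow> nat set" where
  "lengths B = size ` facts B"

definition fdist :: "'a multiset multiset \<Rightarrow> 'a multiset multiset \<Rightarrow> nat" where
  "fdist z x = max (size (z - (z \<inter># x))) (size (x - (z \<inter># x)))"

definition adjacent_lengths :: "'a::ab_group_add multiset \<Rightarrow> nat \<Rightarrow> nat \<Rightarrow> bool" where
  "adjacent_lengths B k l \<longleftrightarrow> k \<noteq> l \<and> k \<in> lengths B \<and> l \<in> lengths B \<and>
     \<not> (\<exists>m\<in>lengths B. min k l < m \<and> m < max k l)"

definition delta_fact :: "'a::ab_group_add multiset multiset \<Rightarrow> nat" where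
  "delta_fact z = (LEAST m::nat. \<forall>k::nat. k \<ge> 1 \<and> adjacent_lengths (fact_pi z) k (size z) \<longrightarrow>
      (\<exists>x. x \<in> facts (fact_pi z) \<and> size x = k \<and> fdist x z \<le> m))"

definition delta_group :: "'a::ab_group_add itself \<Rightarrow> enat" where
  "delta_group _ = (SUP z\<in>{z::'a multiset multiset. is_fact z}. enat (delta_fact z))"

end

theory Submission
  imports Defs
begin

lemma atom_ne: "U \<in> atoms \<Longrightarrow> U \<noteq> {#}"
  by (simp add: atoms_def min_zero_sum_def)

lemma size_le_pi: "is_fact x \<Longrightarrow> size x \<le> size (fact_pi x)"
proof (induction x)
  case empty then show ?case by simp
next
  case (add a x)
  then have "a \<noteq> {#}" "is_fact x" by (auto simp: is_fact_def atom_ne)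
  then have "size x \<le> size (fact_pi x)" using add by simp
  moreover have "size a \<ge> 1" using \<open>a \<noteq> {#}\<close> by (simp add: Suc_le_eq nonempty_has_size)
  ultimately show ?case by (simp add: fact_pi_def)
qed

lemma lengths_le: "l \<in> lengths B \<Longrightarrow> l \<le> size B"
  using size_le_pi by (auto simp: lengths_def facts_def)

lemma lengths_finite: "finite (lengths B)"
  by (rule finite_subset[of _ "{0..size B}"]) (auto dest: lengths_le)

lemma fdist_le: "fdist x z \<le> max (size x) (size z)"
proof -
  have "size (z - (x \<inter># z)) \<le> size z" "size (x - (x \<inter># z)) \<le> size x"
    by (auto intro: size_mset_mono)
  then show ?thesis unfolding fdist_def by linarith
qed

lemma delta_prop:
  assumes "k \<ge> 1" "adjacent_lengths (fact_pi z) k (size z)"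
  shows "\<exists>x. x \<in> facts (fact_pi z) \<and> size x = k \<and> fdist x z \<le> delta_fact z"
proof -
  let ?P = "\<lambda>m::nat. \<forall>k::nat. k \<ge> 1 \<and> adjacent_lengths (fact_pi z) k (size z) \<longrightarrow>
      (\<exists>x. x \<in> facts (fact_pi z) \<and> size x = k \<and> fdist x z \<le> m)"
  have "?P (size (fact_pi z))"
  proof (intro allI impI)
    fix k assume h: "k \<ge> 1 \<and> adjacent_lengths (fact_pi z) k (size z)"
    then have "k \<in> lengths (fact_pi z)" "size z \<in> lengths (fact_pi z)"
      by (auto simp: adjacent_lengths_def)
    then obtain x where x: "x \<in> facts (fact_pi z)" "size x = k"
      by (auto simp: lengths_def)
    have "size x \<le> size (fact_pi z)" "size z \<le> size (fact_pi z)"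
      using lengths_le \<open>k \<in> _\<close> \<open>size z \<in> _\<close> x by auto
    then have "fdist x z \<le> size (fact_pi z)" using fdist_le[of x z] by linarith
    with x show "\<exists>x. x \<in> facts (fact_pi z) \<and> size x = k \<and> fdist x z \<le> size (fact_pi z)" by blast
  qed
  then have "?P (delta_fact z)" unfolding delta_fact_def by (rule LeastI)
  with assms show ?thesis by blast
qed

lemma delta_le_group:
  fixes z :: "'a::ab_group_add multiset multiset"
  shows "is_fact z \<Longrightarrow> enat (delta_fact z) \<le> delta_group TYPE('a)"
  unfolding delta_group_def by (rule SUP_upper) auto

theorem lemma6p3:
  fixes B U :: "'a::{finite, ab_group_add} multiset"
    and z :: "'a multiset multiset"
    and k :: nat
  assumes "k \<ge> 1"
    and "zero_sum B"
    and "Max (lengths B) = k"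
    and "z \<in> facts B"
    and "size z = k"
    and "U \<in> atoms"
    and "enat (count z U) \<ge> delta_group TYPE('a)"
  shows "Max (lengths (B + U)) = k + 1"
proof -
  define w where "w = z + {#U#}"
  have wf: "w \<in> facts (B + U)" "size w = k + 1"
    using assms(4,5,6) by (auto simp: w_def facts_def is_fact_def fact_pi_def)
  then have kin: "k + 1 \<in> lengths (B + U)" unfolding lengths_def by force
  have dle: "delta_fact w \<le> count z U"
    using order_trans[OF delta_le_group[of w] assms(7)] wf by (auto simp: facts_def)
  have Bmax: "l \<le> k" if "l \<in> lengths B" for l
    using assms(3) Max_ge[OF lengths_finite that] by simp
  have "\<not> (\<exists>l\<in>lengths (B + U). l > k + 1)"
  proof
    assume "\<exists>l\<in>lengths (B + U). l > k + 1"
    define S where "S = {m \<in> lengths (B + U). m > k + 1}"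
    have Sne: "S \<noteq> {}" "finite S" using \<open>\<exists>l\<in>_. _\<close> lengths_finite[of "B+U"] by (auto simp: S_def)
    define l where "l = Min S"
    have lS: "l \<in> S" using Sne l_def by simp
    have adj: "adjacent_lengths (fact_pi w) l (size w)"
      unfolding adjacent_lengths_def
    proof (intro conjI)
      show "l \<noteq> size w" using lS wf by (simp add: S_def)
      show "l \<in> lengths (fact_pi w)" using lS wf by (simp add: S_def facts_def)
      show "size w \<in> lengths (fact_pi w)" using kin wf by (simp add: facts_def)
      show "\<not> (\<exists>m\<in>lengths (fact_pi w). min l (size w) < m \<and> m < max l (size w))"
      proof
        assume "\<exists>m\<in>lengths (fact_pi w). min l (size w) < m \<and> m < max l (size w)"
        then obtain m where m: "m \<in> lengths (B + U)" "k + 1 < m" "m < l"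
          using lS wf by (auto simp: S_def facts_def)
        then have "m \<in> S" by (simp add: S_def)
        then have "l \<le> m" using Sne l_def by simp
        with m show False by simp
      qed
    qed
    have "l \<ge> 1" using lS by (simp add: S_def)
    from delta_prop[OF this adj] obtain x where
      x: "x \<in> facts (fact_pi w)" "size x = l" "fdist x w \<le> delta_fact w" by blast
    have "U \<in># x"
    proof (rule ccontr)
      assume "U \<notin># x"
      then have "count (w \<inter># x) U = 0" by (simp add: not_in_iff)
      then have "count (w - (w \<inter># x)) U = count z U + 1" by (simp add: w_def)
      moreover have "count (w - (w \<inter># x)) U \<le> size (w - (w \<inter># x))"
        by (rule count_le_size)
      moreover have "size (w - (w \<inter># x)) \<le> fdist x w"
        unfolding fdist_def by (simp add: inf_commute)
      ultimately show False using x(3) dle by linarith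
    qed
    define y where "y = x - {#U#}"
    have "x = add_mset U y" using \<open>U \<in># x\<close> by (simp add: y_def)
    then have "y \<in> facts B" using x(1) wf
      by (auto simp: facts_def is_fact_def fact_pi_def)
    then have "size y \<in> lengths B" by (simp add: lengths_def)
    moreover have "size y = l - 1" using \<open>x = _\<close> x(2) by (metis diff_Suc_1 size_add_mset)
    ultimately show False using Bmax lS by (fastforce simp: S_def)
  qed
  then show ?thesis using kin lengths_finite
    by (metis Max_eqI not_le)
qed

end
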